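(* Assume the setup in the context, with the fine-tuning regime and local smoothness with radius $r\ge 2\sqrt{C}$. Let $0<\epsilon\le 1$ be such that $|\langle\tau_i,\tau_j\rangle|\le\epsilon\|\tau_i\|\|\tau_j\|$ for all $i\neq j$. Let $\alpha_1,\dots,\alpha_T\ge 0$ with $\sum_{i=1}^T\alpha_i=1$, and set $\theta^T_{\mathrm{Add}}=\theta_0+\sum_{i=1}^T\alpha_i\tau_i$. Then for every $i\in[T]$, $$\mathcal{L}_i(\theta^T_{\mathrm{Add}})-\mathcal{L}_i(\theta_i)\le L_iC(1+\epsilon).$$
   Context: Setup: $\theta_0\in\mathbb{R}^d$ is a pretrained parameter vector; $\theta_1,\dots,\theta_T\in\mathbb{R}^d$ are fine-tuned parameters and $\tau_i:=\theta_i-\theta_0$ are task vectors. For each task $i$, $\mathcal{L}_i:\mathbb{R}^d\to\mathbb{R}$ is a differentiable loss (population risk). Norms are Euclidean. Fine-tuning regime: $\nabla\mathcal{L}_i(\theta_i)=0$ for all $i\in[T]$, and there is $C>0$ with $\|\tau_i\|^2\le C$ for all $i$. Local smoothness with radius $r>0$: for each $i$ there is $L_i\ge 0$ such that for all $\theta$ with $\|\theta-\theta_i\|\le r$, $\big|\mathcal{L}_i(\theta)-\mathcal{L}_i(\theta_i)-\langle\theta-\theta_i,\nabla\mathcal{L}_i(\theta_i)\rangle\big|\le\frac{L_i}{2}\|\theta-\theta_i\|^2$. *)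

theory Defs
  imports "HOL-Analysis.Analysis"
begin

end

theory Submission
  imports Defs
begin

theorem mainTheorem4:
  fixes \<theta>0 :: "'a::euclidean_space"
    and \<theta> :: "nat \<Rightarrow> 'a"
    and \<L> :: "nat \<Rightarrow> 'a \<Rightarrow> real"
    and grad :: "nat \<Rightarrow> 'a \<Rightarrow> 'a"
    and Lsm :: "nat \<Rightarrow> real"
    and \<alpha> :: "nat \<Rightarrow> real"
    and T :: nat and C r \<epsilon> :: real
  assumes diff: "\<And>i x. i \<in> {1..T} \<Longrightarrow> (\<L> i has_derivative (\<lambda>h. grad i x \<bullet> h)) (at x)"
    and stat: "\<And>i. i \<in> {1..T} \<Longrightarrow> grad i (\<theta> i) = 0"
    and C_pos: "C > 0"
    and tau_bd: "\<And>i. i \<in> {1..T} \<Longrightarrow> norm (\<theta> i - \<theta>0) ^ 2 \<le> C"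
    and r_pos: "r > 0"
    and r_ge: "r \<ge> 2 * sqrt C"
    and Lsm_nn: "\<And>i. i \<in> {1..T} \<Longrightarrow> Lsm i \<ge> 0"
    and smooth: "\<And>i x. i \<in> {1..T} \<Longrightarrow> norm (x - \<theta> i) \<le> r \<Longrightarrow>
        \<bar>\<L> i x - \<L> i (\<theta> i) - (x - \<theta> i) \<bullet> grad i (\<theta> i)\<bar> \<le> Lsm i / 2 * norm (x - \<theta> i) ^ 2"
    and eps_pos: "0 < \<epsilon>" and eps_le: "\<epsilon> \<le> 1"
    and incoh: "\<And>i j. i \<in> {1..T} \<Longrightarrow> j \<in> {1..T} \<Longrightarrow> i \<noteq> j \<Longrightarrow>
        \<bar>(\<theta> i - \<theta>0) \<bullet> (\<theta> j - \<theta>0)\<bar> \<le> \<epsilon> * norm (\<theta> i - \<theta>0) * norm (\<theta> j - \<theta>0)"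
    and alpha_nn: "\<And>i. i \<in> {1..T} \<Longrightarrow> \<alpha> i \<ge> 0"
    and alpha_sum: "(\<Sum>i=1..T. \<alpha> i) = 1"
  shows "\<forall>i \<in> {1..T}.
    \<L> i (\<theta>0 + (\<Sum>j=1..T. \<alpha> j *\<^sub>R (\<theta> j - \<theta>0))) - \<L> i (\<theta> i) \<le> Lsm i * C * (1 + \<epsilon>)"
proof
  fix i assume i: "i \<in> {1..T}"
  define \<tau> where "\<tau> j = \<theta> j - \<theta>0" for j
  define s where "s = (\<Sum>j=1..T. \<alpha> j *\<^sub>R \<tau> j)"
  have tn: "norm (\<tau> j) \<le> sqrt C" if "j \<in> {1..T}" for j
    using tau_bd[OF that] by (simp add: \<tau>_def real_le_rsqrt)
  have sn: "norm s \<le> sqrt C"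
  proof -
    have "norm s \<le> (\<Sum>j=1..T. norm (\<alpha> j *\<^sub>R \<tau> j))" unfolding s_def by (rule norm_sum)
    also have "\<dots> \<le> (\<Sum>j=1..T. \<alpha> j * sqrt C)"
      by (rule sum_mono) (simp add: alpha_nn tn mult_left_mono)
    also have "\<dots> = sqrt C" using alpha_sum by (simp add: sum_distrib_right[symmetric])
    finally show ?thesis .
  qed
  have sC: "norm s ^ 2 \<le> C"
    using sn C_pos by (metis norm_ge_zero power_mono real_sqrt_pow2 less_imp_le)
  have ip: "s \<bullet> \<tau> i \<ge> - (\<epsilon> * C)"
  proof -
    have "(\<Sum>j=1..T. - (\<alpha> j * (\<epsilon> * C))) \<le> (\<Sum>j=1..T. \<alpha> j * (\<tau> j \<bullet> \<tau> i))"
    proof (rule sum_mono)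
      fix j assume j: "j \<in> {1..T}"
      show "- (\<alpha> j * (\<epsilon> * C)) \<le> \<alpha> j * (\<tau> j \<bullet> \<tau> i)"
      proof (cases "j = i")
        case True
        have "0 \<le> \<alpha> i * (\<tau> i \<bullet> \<tau> i)" using alpha_nn[OF i] by simp
        moreover have "0 \<le> \<alpha> i * (\<epsilon> * C)" using alpha_nn[OF i] eps_pos C_pos by simp
        ultimately show ?thesis using True by simp
      next
        case False
        have "\<bar>\<tau> j \<bullet> \<tau> i\<bar> \<le> \<epsilon> * norm (\<tau> j) * norm (\<tau> i)"
          using incoh[OF j i False] by (simp add: \<tau>_def)
        also have "\<dots> \<le> \<epsilon> * sqrt C * sqrt C"
          using tn[OF j] tn[OF i] eps_pos C_pos
          by (intro mult_mono) (auto simp: mult_mono)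
        also have "\<dots> = \<epsilon> * C" using C_pos by simp
        finally have "- (\<epsilon> * C) \<le> \<tau> j \<bullet> \<tau> i" by linarith
        then show ?thesis using alpha_nn[OF j]
          by (metis mult_left_mono mult_minus_right)
      qed
    qed
    moreover have "(\<Sum>j=1..T. - (\<alpha> j * (\<epsilon> * C))) = - (\<epsilon> * C)"
      using alpha_sum by (simp add: sum_negf sum_distrib_right[symmetric])
    moreover have "s \<bullet> \<tau> i = (\<Sum>j=1..T. \<alpha> j * (\<tau> j \<bullet> \<tau> i))"
      unfolding s_def by (simp add: inner_sum_left)
    ultimately show ?thesis by linarith
  qed
  define x where "x = \<theta>0 + s"
  have xd: "x - \<theta> i = s - \<tau> i" by (simp add: x_def \<tau>_def)
  have "norm (x - \<theta> i) \<le> r"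
  proof -
    have "norm (s - \<tau> i) \<le> norm s + norm (\<tau> i)" by (rule norm_triangle_ineq4)
    also have "\<dots> \<le> 2 * sqrt C" using sn tn[OF i] by linarith
    finally show ?thesis using r_ge xd by simp
  qed
  from smooth[OF i this] stat[OF i]
  have "\<bar>\<L> i x - \<L> i (\<theta> i)\<bar> \<le> Lsm i / 2 * norm (s - \<tau> i) ^ 2" by (simp add: xd)
  hence "\<L> i x - \<L> i (\<theta> i) \<le> Lsm i / 2 * norm (s - \<tau> i) ^ 2" by (rule order.trans[OF abs_ge_self])
  also have "norm (s - \<tau> i) ^ 2 = norm s ^ 2 - 2 * (s \<bullet> \<tau> i) + norm (\<tau> i) ^ 2"
    by (simp add: power2_norm_eq_inner inner_diff_left inner_diff_right inner_commute)
  also have "Lsm i / 2 * (norm s ^ 2 - 2 * (s \<bullet> \<tau> i) + norm (\<tau> i) ^ 2) \<le> Lsm i / 2 * (2 * C * (1 + \<epsilon>))"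
    using sC ip tau_bd[OF i] Lsm_nn[OF i]
    by (intro mult_left_mono) (auto simp: \<tau>_def algebra_simps)
  finally show "\<L> i (\<theta>0 + (\<Sum>j=1..T. \<alpha> j *\<^sub>R (\<theta> j - \<theta>0))) - \<L> i (\<theta> i) \<le> Lsm i * C * (1 + \<epsilon>)"
    by (simp add: x_def s_def \<tau>_def)
qed

end
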